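(* (i) For every $\epsilon>0$ there exist $\beta,\gamma\in\mathcal{I}_\alpha$ with $d_H(\beta,\gamma)<\epsilon$ and $d_\alpha(\beta,\gamma)>1/\epsilon$. (ii) For all $\beta,\gamma\in\mathcal{I}_\alpha$, $d_H'(\beta,\gamma)\le d_\alpha(\beta,\gamma)$. (iii) The metrics $d_H$ and $d_H'$ generate the same topology on $\mathcal{I}_H$.
   Context: Fix $\alpha\in(0,1)$. An interval partition is a set $\beta$ of disjoint open subintervals (blocks) of some interval $[0,L]$ that cover $[0,L]$ up to a Lebesgue-null set; write $\|\beta\|:=L$ and $\mathrm{Leb}(U)$ for the length of a block $U$. $\mathcal{I}_H$ is the set of all interval partitions. For $\beta\in\mathcal{I}_H$ let $C_\beta:=[0,\|\beta\|]\setminus\bigcup_{U\in\beta}U$, and $d_H(\beta,\gamma)$ the Hausdorff distance between $C_\beta$ and $C_\gamma$. $\beta$ has the $\alpha$-diversity property if for every $t\in[0,\|\beta\|]$ the limit $\mathscr{D}_\beta(t):=\Gamma(1-\alpha)\lim_{h\downarrow0}h^\alpha\#\{(a,b)\in\beta\colon b-a>h,\ b\le t\}$ exists; $\mathcal{I}_\alpha$ is the set of such partitions. For $U\in\beta$, $\mathscr{D}_\beta(U):=\mathscr{D}_\beta(t)$ for $t\in U$; $\mathscr{D}_\beta(\infty):=\mathscr{D}_\beta(\|\beta\|)$. A correspondence between $\beta,\gamma$ is a finite sequence $(U_j,V_j)_{j\in[n]}$, $n\ge0$, of pairs in $\beta\times\gamma$ with $(U_j)_j$ and $(V_j)_j$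 each strictly increasing in left-to-right order. Its Hausdorff distortion is the maximum of (i') $\sum_{j}|\mathrm{Leb}(U_j)-\mathrm{Leb}(V_j)|+\|\beta\|-\sum_j\mathrm{Leb}(U_j)$ and (ii') $\sum_{j}|\mathrm{Leb}(U_j)-\mathrm{Leb}(V_j)|+\|\gamma\|-\sum_j\mathrm{Leb}(V_j)$; for $\beta,\gamma\in\mathcal{I}_\alpha$ its $\alpha$-distortion is the maximum of (i'), (ii'), $\sup_j|\mathscr{D}_\beta(U_j)-\mathscr{D}_\gamma(V_j)|$ and $|\mathscr{D}_\beta(\infty)-\mathscr{D}_\gamma(\infty)|$. $d_H'$ and $d_\alpha$ are the infima over all correspondences of the Hausdorff distortion and the $\alpha$-distortion, respectively. *)

theory Defs
  imports "HOL-Analysis.Analysis"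
begin

text \<open>A block (a,b) stands for the open interval with endpoints a < b.
  An interval partition is a set of such pairs.\<close>

type_synonym block = "real \<times> real"

definition block_set :: "block \<Rightarrow> real set" where
  "block_set U = {fst U<..<snd U}"

definition Leb :: "block \<Rightarrow> real" where
  "Leb U = snd U - fst U"

definition is_IP_of :: "real \<Rightarrow> block set \<Rightarrow> bool" where
  "is_IP_of L \<beta> \<longleftrightarrow> 0 \<le> L
     \<and> (\<forall>U\<in>\<beta>. 0 \<le> fst U \<and> fst U < snd U \<and> snd U \<le> L)
     \<and> (\<forall>U\<in>\<beta>. \<forall>V\<in>\<beta>. U \<noteq> V \<longrightarrow> block_set U \<inter> block_set V = {})
     \<and> {0..L} - (\<Union>U\<in>\<beta>. block_set U) \<in> null_sets lborel"

definition IH :: "block set set" where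
  "IH = {\<beta>. \<exists>L. is_IP_of L \<beta>}"

definition IP_norm :: "block set \<Rightarrow> real" where
  "IP_norm \<beta> = (THE L. is_IP_of L \<beta>)"

definition Cset :: "block set \<Rightarrow> real set" where
  "Cset \<beta> = {0..IP_norm \<beta>} - (\<Union>U\<in>\<beta>. block_set U)"

definition hausdorff_dist :: "real set \<Rightarrow> real set \<Rightarrow> real" where
  "hausdorff_dist A B = max (SUP x\<in>A. infdist x B) (SUP y\<in>B. infdist y A)"

definition dH :: "block set \<Rightarrow> block set \<Rightarrow> real" where
  "dH \<beta> \<gamma> = hausdorff_dist (Cset \<beta>) (Cset \<gamma>)"

definition div_count :: "block set \<Rightarrow> real \<Rightarrow> real \<Rightarrow> real" where
  "div_count \<beta> t h = real (card {U\<in>\<beta>. Leb U > h \<and> snd U \<le> t})"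

definition IA :: "real \<Rightarrow> block set set" where
  "IA \<alpha> = {\<beta>\<in>IH. \<forall>t\<in>{0..IP_norm \<beta>}.
             \<exists>l. ((\<lambda>h. h powr \<alpha> * div_count \<beta> t h) \<longlongrightarrow> l) (at_right 0)}"

definition Div :: "real \<Rightarrow> block set \<Rightarrow> real \<Rightarrow> real" where
  "Div \<alpha> \<beta> t = Gamma (1 - \<alpha>) * Lim (at_right 0) (\<lambda>h. h powr \<alpha> * div_count \<beta> t h)"

text \<open>Diversity of a block: value at any point of the block (here its midpoint).\<close>
definition Div_block :: "real \<Rightarrow> block set \<Rightarrow> block \<Rightarrow> real" where
  "Div_block \<alpha> \<beta> U = Div \<alpha> \<beta> ((fst U + snd U) / 2)"

definition Div_inf :: "real \<Rightarrow> block set \<Rightarrow> real" where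
  "Div_inf \<alpha> \<beta> = Div \<alpha> \<beta> (IP_norm \<beta>)"

definition correspondence :: "block set \<Rightarrow> block set \<Rightarrow> (block \<times> block) list \<Rightarrow> bool" where
  "correspondence \<beta> \<gamma> cs \<longleftrightarrow>
     (\<forall>p\<in>set cs. fst p \<in> \<beta> \<and> snd p \<in> \<gamma>)
     \<and> sorted_wrt (\<lambda>p q. fst (fst p) < fst (fst q)) cs
     \<and> sorted_wrt (\<lambda>p q. fst (snd p) < fst (snd q)) cs"

definition dis_H :: "block set \<Rightarrow> block set \<Rightarrow> (block \<times> block) list \<Rightarrow> real" where
  "dis_H \<beta> \<gamma> cs =
     (let S = (\<Sum>p\<leftarrow>cs. \<bar>Leb (fst p) - Leb (snd p)\<bar>) in
      max (S + IP_norm \<beta> - (\<Sum>p\<leftarrow>cs. Leb (fst p)))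
          (S + IP_norm \<gamma> - (\<Sum>p\<leftarrow>cs. Leb (snd p))))"

text \<open>The supremum over j of the diversity differences (0 for the empty correspondence;
  all other terms are nonnegative so this convention is harmless).\<close>
definition dis_alpha :: "real \<Rightarrow> block set \<Rightarrow> block set \<Rightarrow> (block \<times> block) list \<Rightarrow> real" where
  "dis_alpha \<alpha> \<beta> \<gamma> cs =
     max (dis_H \<beta> \<gamma> cs)
       (max (Max (insert 0 ((\<lambda>p. \<bar>Div_block \<alpha> \<beta> (fst p) - Div_block \<alpha> \<gamma> (snd p)\<bar>) ` set cs)))
            \<bar>Div_inf \<alpha> \<beta> - Div_inf \<alpha> \<gamma>\<bar>)"

definition dH' :: "block set \<Rightarrow> block set \<Rightarrow> real" where
  "dH' \<beta> \<gamma> = Inf {dis_H \<beta> \<gamma> cs | cs. correspondence \<beta> \<gamma> cs}"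

definition d_alpha :: "real \<Rightarrow> block set \<Rightarrow> block set \<Rightarrow> real" where
  "d_alpha \<alpha> \<beta> \<gamma> = Inf {dis_alpha \<alpha> \<beta> \<gamma> cs | cs. correspondence \<beta> \<gamma> cs}"

definition metric_open :: "'a set \<Rightarrow> ('a \<Rightarrow> 'a \<Rightarrow> real) \<Rightarrow> 'a set \<Rightarrow> bool" where
  "metric_open X d S \<longleftrightarrow> S \<subseteq> X \<and> (\<forall>x\<in>S. \<exists>e>0. \<forall>y\<in>X. d x y < e \<longrightarrow> y \<in> S)"

end

theory Submission
  imports Defs
begin

lemma IP_not_less:
  assumes "is_IP_of L b" "is_IP_of L' b" shows "\<not> L < L'"
proof
  assume lt: "L < L'"
  have sub: "{L<..<L'} \<subseteq> {0..L'} - (\<Union>U\<in>b. block_set U)"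
    using assms lt unfolding is_IP_of_def block_set_def by force
  have "{L<..<L'} \<in> null_sets lborel"
    by (rule null_sets_subset[OF _ _ sub]) (use assms(2) in \<open>auto simp: is_IP_of_def\<close>)
  hence "emeasure lborel {L<..<L'} = 0" by auto
  thus False using lt by simp
qed

lemma IP_unique: "is_IP_of L b \<Longrightarrow> is_IP_of L' b \<Longrightarrow> L = L'"
  using IP_not_less by (meson linorder_neqE_linordered_idom)

lemma IP_norm_eq: "is_IP_of L b \<Longrightarrow> IP_norm b = L"
  unfolding IP_norm_def using IP_unique by blast

lemma IH_IP: "b \<in> IH \<Longrightarrow> is_IP_of (IP_norm b) b"
  unfolding IH_def using IP_norm_eq by auto

lemma IH_blk: assumes "b \<in> IH" "U \<in> b"
  shows "0 \<le> fst U" "fst U < snd U" "snd U \<le> IP_norm b"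
  using IH_IP[OF assms(1)] assms(2) unfolding is_IP_of_def by auto

lemma IH_norm_nonneg: "b \<in> IH \<Longrightarrow> 0 \<le> IP_norm b"
  using IH_IP unfolding is_IP_of_def by auto

lemma IH_disj: assumes "b \<in> IH" "U \<in> b" "V \<in> b" "U \<noteq> V"
  shows "block_set U \<inter> block_set V = {}"
  using IH_IP[OF assms(1)] assms(2-4) unfolding is_IP_of_def by auto

lemma blk_order: assumes "b \<in> IH" "U \<in> b" "V \<in> b" "fst U < fst V"
  shows "snd U \<le> fst V"
proof (rule ccontr)
  assume "\<not> snd U \<le> fst V"
  define p where "p = (fst V + min (snd U) (snd V)) / 2"
  have "p \<in> block_set U" "p \<in> block_set V"
    using \<open>\<not> snd U \<le> fst V\<close> assms IH_blk[OF assms(1) assms(2)] IH_blk[OF assms(1) assms(3)]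
    unfolding p_def block_set_def by auto
  moreover have "U \<noteq> V" using assms(4) by auto
  ultimately show False using IH_disj[OF assms(1-3)] by auto
qed

lemma blk_fst_eq: assumes "b \<in> IH" "U \<in> b" "V \<in> b" "fst U = fst V"
  shows "U = V"
proof (rule ccontr)
  assume "U \<noteq> V"
  define p where "p = (fst V + min (snd U) (snd V)) / 2"
  have "p \<in> block_set U" "p \<in> block_set V"
    using assms IH_blk[OF assms(1) assms(2)] IH_blk[OF assms(1) assms(3)]
    unfolding p_def block_set_def by auto
  thus False using IH_disj[OF assms(1-3) \<open>U \<noteq> V\<close>] by auto
qed

lemma Cset_iff: "x \<in> Cset b \<longleftrightarrow> 0 \<le> x \<and> x \<le> IP_norm b \<and> (\<forall>U\<in>b. x \<notin> block_set U)"
  unfolding Cset_def by auto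

lemma Cset_0: "b \<in> IH \<Longrightarrow> 0 \<in> Cset b"
  unfolding Cset_iff using IH_norm_nonneg IH_blk by (force simp: block_set_def)

lemma Cset_L: "b \<in> IH \<Longrightarrow> IP_norm b \<in> Cset b"
  unfolding Cset_iff using IH_norm_nonneg IH_blk by (force simp: block_set_def)

lemma Cset_snd: assumes "b \<in> IH" "U \<in> b" shows "snd U \<in> Cset b"
  unfolding Cset_iff
proof (intro conjI ballI)
  show "0 \<le> snd U" "snd U \<le> IP_norm b" using IH_blk[OF assms] by auto
  fix V assume V: "V \<in> b"
  show "snd U \<notin> block_set V"
  proof
    assume "snd U \<in> block_set V"
    hence "fst V < snd U" "snd U < snd V" by (auto simp: block_set_def)
    show False
    proof (cases "fst U < fst V")
      case True then show ?thesis using blk_order[OF assms V] \<open>fst V < snd U\<close> by auto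
    next
      case False
      show ?thesis
      proof (cases "fst U = fst V")
        case True then show ?thesis using blk_fst_eq[OF assms V] \<open>snd U < snd V\<close> by auto
      next
        case False
        hence "fst V < fst U" using \<open>\<not> fst U < fst V\<close> by auto
        then show ?thesis using blk_order[OF assms(1) V assms(2)] \<open>snd U < snd V\<close>
          IH_blk[OF assms] by auto
      qed
    qed
  qed
qed

lemma Cset_fst: assumes "b \<in> IH" "U \<in> b" shows "fst U \<in> Cset b"
  unfolding Cset_iff
proof (intro conjI ballI)
  show "0 \<le> fst U" "fst U \<le> IP_norm b" using IH_blk[OF assms] by auto
  fix V assume V: "V \<in> b"
  show "fst U \<notin> block_set V"
  proof
    assume "fst U \<in> block_set V"
    hence "fst V < fst U" "fst U < snd V" by (auto simp: block_set_def)
    thus False using blk_order[OF assms(1) V assms(2)] by auto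
  qed
qed

lemma sum_blocks_le:
  assumes "b \<in> IH" "set us \<subseteq> b" "sorted_wrt (\<lambda>U V. fst U < fst V) us"
    "\<forall>U\<in>set us. x \<le> fst U \<and> snd U \<le> y" "x \<le> y"
  shows "sum_list (map Leb us) \<le> y - x"
  using assms(2-5)
proof (induction us arbitrary: x)
  case Nil then show ?case by simp
next
  case (Cons U us)
  have U: "U \<in> b" using Cons.prems by auto
  have "\<forall>V\<in>set us. snd U \<le> fst V \<and> snd V \<le> y"
    using Cons.prems blk_order[OF assms(1) U] by auto
  moreover have "snd U \<le> y" using Cons.prems by auto
  ultimately have "sum_list (map Leb us) \<le> y - snd U"
    using Cons.IH[of "snd U"] Cons.prems by auto
  moreover have "fst U \<ge> x" using Cons.prems by auto
  moreover have "Leb U = snd U - fst U" by (simp add: Leb_def)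
  ultimately show ?case by simp
qed


lemma corr_sum_fst:
  assumes "b \<in> IH" "correspondence b g cs"
  shows "(\<Sum>p\<leftarrow>cs. Leb (fst p)) \<le> IP_norm b"
proof -
  have "sum_list (map Leb (map fst cs)) \<le> IP_norm b - 0"
    apply (rule sum_blocks_le[OF assms(1)])
    using assms(2) IH_blk[OF assms(1)] IH_norm_nonneg[OF assms(1)]
    by (auto simp: correspondence_def sorted_wrt_map)
  thus ?thesis by (simp add: o_def)
qed

lemma corr_sum_snd:
  assumes "g \<in> IH" "correspondence b g cs"
  shows "(\<Sum>p\<leftarrow>cs. Leb (snd p)) \<le> IP_norm g"
proof -
  have "sum_list (map Leb (map snd cs)) \<le> IP_norm g - 0"
    apply (rule sum_blocks_le[OF assms(1)])
    using assms(2) IH_blk[OF assms(1)] IH_norm_nonneg[OF assms(1)]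
    by (auto simp: correspondence_def sorted_wrt_map)
  thus ?thesis by (simp add: o_def)
qed

lemma sum_list_abs_ge: "0 \<le> (\<Sum>p\<leftarrow>xs. \<bar>f p - (g p::real)\<bar>)"
  by (induction xs) auto

lemma sum_list_abs_diff: "\<bar>(\<Sum>p\<leftarrow>xs. f p) - (\<Sum>p\<leftarrow>xs. g p)\<bar> \<le> (\<Sum>p\<leftarrow>xs. \<bar>f p - (g p::real)\<bar>)"
  by (induction xs) auto

lemma dis_H_nonneg:
  assumes "b \<in> IH" "g \<in> IH" "correspondence b g cs"
  shows "0 \<le> dis_H b g cs"
  using corr_sum_fst[OF assms(1,3)] sum_list_abs_ge[of "\<lambda>p. Leb (fst p)" "\<lambda>p. Leb (snd p)" cs]
  unfolding dis_H_def Let_def by auto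

lemma corr_nil: "correspondence b g []"
  by (simp add: correspondence_def)

lemma dH'_le:
  assumes "b \<in> IH" "g \<in> IH" "correspondence b g cs"
  shows "dH' b g \<le> dis_H b g cs"
  unfolding dH'_def
  by (rule cInf_lower) (use assms dis_H_nonneg in \<open>auto simp: bdd_below_def\<close>)

lemma part2:
  assumes "b \<in> IH" "g \<in> IH"
  shows "dH' b g \<le> d_alpha a b g"
  unfolding dH'_def d_alpha_def
proof (rule cInf_mono)
  show "{dis_alpha a b g cs |cs. correspondence b g cs} \<noteq> {}" using corr_nil by blast
  show "bdd_below {dis_H b g cs |cs. correspondence b g cs}"
    using assms dis_H_nonneg unfolding bdd_below_def by blast
  fix y assume "y \<in> {dis_alpha a b g cs |cs. correspondence b g cs}"
  then obtain cs where "correspondence b g cs" "y = dis_alpha a b g cs" by auto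
  thus "\<exists>x\<in>{dis_H b g cs |cs. correspondence b g cs}. x \<le> y"
    unfolding dis_alpha_def by auto
qed

lemma arith_aux:
  fixes x y a1 a2 b1 b2 s1 s2 Lb Lg :: real
  assumes "a1 \<le> x - 0" "a2 \<le> Lb - x" "b1 \<le> y - 0" "b2 \<le> Lg - y" "\<bar>a1 - b1\<bar> \<le> s1" "0 \<le> s2"
  shows "\<bar>x - y\<bar> \<le> 2 * max (s1 + s2 + Lb - (a1 + a2)) (s1 + s2 + Lg - (b1 + b2))"
  using assms by (simp add: abs_le_iff max_def)

lemma near_point:
  assumes B: "b \<in> IH" and G: "g \<in> IH" and C: "correspondence b g cs" and x: "x \<in> Cset b"
  shows "\<exists>y\<in>Cset g. \<bar>x - y\<bar> \<le> 2 * dis_H b g cs"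
proof -
  define P where "P = (\<lambda>p::block\<times>block. snd (fst p) \<le> x)"
  define P1 where "P1 = takeWhile P cs"
  define P2 where "P2 = dropWhile P cs"
  have cs: "cs = P1 @ P2" unfolding P1_def P2_def by simp
  have inb: "\<forall>p\<in>set cs. fst p \<in> b \<and> snd p \<in> g" using C by (simp add: correspondence_def)
  have s1: "sorted_wrt (\<lambda>p q. fst (fst p) < fst (fst q)) (P1 @ P2)"
   and s2: "sorted_wrt (\<lambda>p q. fst (snd p) < fst (snd q)) (P1 @ P2)"
    using C cs by (auto simp: correspondence_def)
  have xC: "0 \<le> x" "x \<le> IP_norm b" "\<forall>U\<in>b. x \<notin> block_set U" using x by (auto simp: Cset_iff)
  have A: "\<forall>p\<in>set P1. snd (fst p) \<le> x" unfolding P1_def using set_takeWhileD P_def by fastforce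
  have Bf: "\<forall>p\<in>set P2. x \<le> fst (fst p)"
  proof
    fix p assume p: "p \<in> set P2"
    hence ne: "P2 \<noteq> []" by auto
    define q where "q = hd P2"
    have q: "q \<in> set P2" using ne unfolding q_def by auto
    have "\<not> P q" using hd_dropWhile ne unfolding q_def P2_def by metis
    hence "x < snd (fst q)" unfolding P_def by auto
    moreover have "fst q \<in> b" using q inb cs by auto
    ultimately have xq: "x \<le> fst (fst q)" using xC(3) by (force simp: block_set_def)
    have "fst (fst q) \<le> fst (fst p)"
    proof (cases "p = q")
      case False
      obtain r rs where "P2 = r # rs" using ne by (cases P2) auto
      hence "q = r" "p \<in> set rs" using False p unfolding q_def by auto
      thus ?thesis using s1 \<open>P2 = r # rs\<close> by (auto simp: sorted_wrt_append)
    qed simp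
    thus "x \<le> fst (fst p)" using xq by simp
  qed
  define y where "y = Max (insert 0 ((\<lambda>p. snd (snd p)) ` set P1))"
  have yin: "y \<in> insert 0 ((\<lambda>p. snd (snd p)) ` set P1)" unfolding y_def by (intro Max_in) auto
  have yC: "y \<in> Cset g"
    using yin
  proof
    assume "y \<in> (\<lambda>p. snd (snd p)) ` set P1"
    then obtain p where "p \<in> set P1" "y = snd (snd p)" by auto
    moreover have "snd p \<in> g" using \<open>p \<in> set P1\<close> inb cs by auto
    ultimately show ?thesis using Cset_snd[OF G] by auto
  qed (use Cset_0[OF G] in auto)
  have y0: "0 \<le> y" unfolding y_def by (intro Max_ge) auto
  have yL: "y \<le> IP_norm g" using yC by (simp add: Cset_iff)
  have yA: "\<forall>p\<in>set P1. snd (snd p) \<le> y" unfolding y_def by (auto intro: Max_ge)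
  have yB: "\<forall>p\<in>set P2. y \<le> fst (snd p)"
  proof
    fix p assume p: "p \<in> set P2"
    have pg: "snd p \<in> g" using p inb cs by auto
    show "y \<le> fst (snd p)"
      using yin
    proof
      assume "y = 0" thus ?thesis using IH_blk[OF G pg] by simp
    next
      assume "y \<in> (\<lambda>p. snd (snd p)) ` set P1"
      then obtain p' where p': "p' \<in> set P1" "y = snd (snd p')" by auto
      have "fst (snd p') < fst (snd p)" using s2 p p' by (auto simp: sorted_wrt_append)
      moreover have "snd p' \<in> g" using p' inb cs by auto
      ultimately show ?thesis using blk_order[OF G] pg p' by auto
    qed
  qed
  have a1: "(\<Sum>p\<leftarrow>P1. Leb (fst p)) \<le> x - 0"
    using sum_blocks_le[OF B, of "map fst P1" 0 x] A inb cs s1 xC IH_blk[OF B]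
    by (auto simp: sorted_wrt_append sorted_wrt_map o_def)
  have a2: "(\<Sum>p\<leftarrow>P2. Leb (fst p)) \<le> IP_norm b - x"
    using sum_blocks_le[OF B, of "map fst P2" x "IP_norm b"] Bf inb cs s1 xC IH_blk[OF B]
    by (auto simp: sorted_wrt_append sorted_wrt_map o_def)
  have b1: "(\<Sum>p\<leftarrow>P1. Leb (snd p)) \<le> y - 0"
    using sum_blocks_le[OF G, of "map snd P1" 0 y] yA inb cs s2 y0 IH_blk[OF G]
    by (auto simp: sorted_wrt_append sorted_wrt_map o_def)
  have b2: "(\<Sum>p\<leftarrow>P2. Leb (snd p)) \<le> IP_norm g - y"
    using sum_blocks_le[OF G, of "map snd P2" y "IP_norm g"] yB inb cs s2 yL IH_blk[OF G]
    by (auto simp: sorted_wrt_append sorted_wrt_map o_def)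
  have a1': "0 \<le> (\<Sum>p\<leftarrow>P1. Leb (fst p))"
  proof (rule sum_list_nonneg)
    fix z assume "z \<in> set (map (\<lambda>p. Leb (fst p)) P1)"
    then obtain p where "p \<in> set P1" "z = Leb (fst p)" by auto
    moreover have "fst p \<in> b" using \<open>p \<in> set P1\<close> inb cs by auto
    ultimately show "0 \<le> z" using IH_blk(2)[OF B] by (auto simp: Leb_def less_imp_le)
  qed
  have b1': "0 \<le> (\<Sum>p\<leftarrow>P1. Leb (snd p))"
  proof (rule sum_list_nonneg)
    fix z assume "z \<in> set (map (\<lambda>p. Leb (snd p)) P1)"
    then obtain p where "p \<in> set P1" "z = Leb (snd p)" by auto
    moreover have "snd p \<in> g" using \<open>p \<in> set P1\<close> inb cs by auto
    ultimately show "0 \<le> z" using IH_blk(2)[OF G] by (auto simp: Leb_def less_imp_le)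
  qed
  have S1: "\<bar>(\<Sum>p\<leftarrow>P1. Leb (fst p)) - (\<Sum>p\<leftarrow>P1. Leb (snd p))\<bar> \<le> (\<Sum>p\<leftarrow>P1. \<bar>Leb (fst p) - Leb (snd p)\<bar>)"
    by (rule sum_list_abs_diff)
  have S2: "0 \<le> (\<Sum>p\<leftarrow>P2. \<bar>Leb (fst p) - Leb (snd p)\<bar>)" by (rule sum_list_abs_ge)
  have "\<bar>x - y\<bar> \<le> 2 * dis_H b g cs"
    using arith_aux[OF a1 a2 b1 b2 S1 S2] unfolding dis_H_def Let_def cs by simp
  thus ?thesis using yC by auto
qed

lemma corr_swap: "correspondence b g cs \<Longrightarrow> correspondence g b (map prod.swap cs)"
  by (auto simp: correspondence_def sorted_wrt_map)

lemma dis_H_swap: "dis_H g b (map prod.swap cs) = dis_H b g cs"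
proof -
  have "(\<Sum>p\<leftarrow>cs. \<bar>Leb (snd p) - Leb (fst p)\<bar>) = (\<Sum>p\<leftarrow>cs. \<bar>Leb (fst p) - Leb (snd p)\<bar>)"
    by (simp add: abs_minus_commute)
  thus ?thesis unfolding dis_H_def Let_def by (simp add: o_def max.commute)
qed

lemma SUP_le_2dis:
  assumes B: "b \<in> IH" and G: "g \<in> IH" and C: "correspondence b g cs"
  shows "(SUP x\<in>Cset b. infdist x (Cset g)) \<le> 2 * dis_H b g cs"
proof (rule cSUP_least)
  show "Cset b \<noteq> {}" using Cset_0[OF B] by auto
  fix x assume "x \<in> Cset b"
  then obtain y where "y \<in> Cset g" "\<bar>x - y\<bar> \<le> 2 * dis_H b g cs" using near_point[OF B G C] by blast
  thus "infdist x (Cset g) \<le> 2 * dis_H b g cs" by (intro infdist_le2) (auto simp: dist_real_def)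
qed

lemma dH_le_2dis:
  assumes B: "b \<in> IH" and G: "g \<in> IH" and C: "correspondence b g cs"
  shows "dH b g \<le> 2 * dis_H b g cs"
  using SUP_le_2dis[OF B G C] SUP_le_2dis[OF G B corr_swap[OF C]] dis_H_swap[of g b cs]
  unfolding dH_def hausdorff_dist_def by simp

lemma dH_le_2dH':
  assumes B: "b \<in> IH" and G: "g \<in> IH"
  shows "dH b g \<le> 2 * dH' b g"
proof -
  have "dH b g / 2 \<le> dH' b g" unfolding dH'_def
  proof (rule cInf_greatest)
    show "{dis_H b g cs |cs. correspondence b g cs} \<noteq> {}" using corr_nil by blast
    fix x assume "x \<in> {dis_H b g cs |cs. correspondence b g cs}"
    then obtain cs where "correspondence b g cs" "x = dis_H b g cs" by auto
    thus "dH b g / 2 \<le> x" using dH_le_2dis[OF B G] by fastforce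
  qed
  thus ?thesis by simp
qed


lemma IH_countable: assumes B: "b \<in> IH" shows "countable b"
proof -
  have "\<forall>U\<in>b. \<exists>r. r \<in> \<rat> \<and> r \<in> block_set U"
  proof
    fix U assume "U \<in> b"
    hence "fst U < snd U" using IH_blk(2)[OF B] by simp
    then obtain r where "r \<in> \<rat>" "fst U < r" "r < snd U" using Rats_dense_in_real by blast
    thus "\<exists>r. r \<in> \<rat> \<and> r \<in> block_set U" by (auto simp: block_set_def)
  qed
  then obtain q where q0: "\<forall>U\<in>b. q U \<in> \<rat> \<and> q U \<in> block_set U" by (rule bchoice[THEN exE])
  hence q: "\<And>U. U \<in> b \<Longrightarrow> q U \<in> \<rat> \<and> q U \<in> block_set U" by blast
  have "inj_on q b"
  proof
    fix U V assume "U \<in> b" "V \<in> b" "q U = q V"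
    show "U = V"
    proof (rule ccontr)
      assume "U \<noteq> V"
      hence "block_set U \<inter> block_set V = {}" using IH_disj[OF B \<open>U \<in> b\<close> \<open>V \<in> b\<close>] by simp
      moreover have "q U \<in> block_set U" "q V \<in> block_set V" using q \<open>U \<in> b\<close> \<open>V \<in> b\<close> by auto
      ultimately show False using \<open>q U = q V\<close> by auto
    qed
  qed
  moreover have "countable (q ` b)"
    by (rule countable_subset[OF _ countable_rat]) (use q in auto)
  ultimately show ?thesis using countable_image_inj_on by blast
qed

lemma IH_measure_le:
  assumes B: "b \<in> IH"
  shows "ennreal (IP_norm b) \<le> emeasure lborel (\<Union>U\<in>b. block_set U)"
proof -
  let ?X = "\<Union>U\<in>b. block_set U"
  have op: "open ?X" by (intro open_Union) (auto simp: block_set_def)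
  have Xs: "?X \<in> sets lborel" using borel_open[OF op] by simp
  have N: "{0..IP_norm b} - ?X \<in> null_sets lborel" using IH_IP[OF B] by (simp add: is_IP_of_def)
  have "ennreal (IP_norm b) = emeasure lborel {0..IP_norm b}" using IH_norm_nonneg[OF B] by simp
  also have "\<dots> \<le> emeasure lborel (?X \<union> ({0..IP_norm b} - ?X))"
    by (rule emeasure_mono) (use Xs N in auto)
  also have "\<dots> = emeasure lborel ?X" by (rule emeasure_Un_null_set[OF Xs N])
  finally show ?thesis .
qed

lemma finite_approx:
  assumes B: "b \<in> IH" and e: "0 < e"
  shows "\<exists>F. finite F \<and> F \<subseteq> b \<and> IP_norm b - e < (\<Sum>U\<in>F. Leb U)"
proof (cases "IP_norm b < e")
  case True thus ?thesis by (intro exI[of _ "{}"]) auto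
next
  case False
  let ?X = "\<Union>U\<in>b. block_set U"
  have Lnn: "\<And>U. U \<in> b \<Longrightarrow> 0 \<le> Leb U" using IH_blk(2)[OF B] by (simp add: Leb_def less_imp_le)
  have emU: "\<And>U. U \<in> b \<Longrightarrow> emeasure lborel (block_set U) = ennreal (Leb U)"
    using IH_blk(2)[OF B] by (simp add: block_set_def Leb_def less_imp_le)
  show ?thesis
  proof (cases "finite b")
    case True
    have "ennreal (IP_norm b) \<le> emeasure lborel ?X" by (rule IH_measure_le[OF B])
    also have "\<dots> \<le> (\<Sum>U\<in>b. emeasure lborel (block_set U))"
      by (rule emeasure_subadditive_finite[OF True]) (auto simp: block_set_def intro!: borel_open)
    also have "\<dots> = (\<Sum>U\<in>b. ennreal (Leb U))" using emU by simp
    also have "\<dots> = ennreal (\<Sum>U\<in>b. Leb U)" using Lnn by (simp add: sum_ennreal)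
    finally have "IP_norm b \<le> (\<Sum>U\<in>b. Leb U)"
      using Lnn by (simp add: ennreal_le_iff sum_nonneg)
    thus ?thesis using True e by (intro exI[of _ b]) auto
  next
    case False
    define f where "f = from_nat_into b"
    have bij: "bij_betw f UNIV b" unfolding f_def by (rule bij_betw_from_nat_into[OF IH_countable[OF B] False])
    have Xeq: "?X = (\<Union>n. block_set (f n))" using bij by (auto simp: bij_betw_def)
    show ?thesis
    proof (rule ccontr)
      assume H: "\<not> ?thesis"
      have le: "\<And>n. (\<Sum>i<n. Leb (f i)) \<le> IP_norm b - e"
      proof -
        fix n
        have "finite (f ` {..<n})" "f ` {..<n} \<subseteq> b" using bij by (auto simp: bij_betw_def)
        hence "(\<Sum>U\<in>f ` {..<n}. Leb U) \<le> IP_norm b - e" using H by auto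
        moreover have "(\<Sum>U\<in>f ` {..<n}. Leb U) = (\<Sum>i<n. Leb (f i))"
          by (rule sum.reindex_cong[OF _ refl refl]) (use bij in \<open>auto simp: bij_betw_def inj_on_def\<close>)
        ultimately show "(\<Sum>i<n. Leb (f i)) \<le> IP_norm b - e" by simp
      qed
      have fb: "\<And>i. f i \<in> b" using bij by (auto simp: bij_betw_def)
      have "ennreal (IP_norm b) \<le> emeasure lborel (\<Union>n. block_set (f n))" using IH_measure_le[OF B] Xeq by simp
      also have "\<dots> \<le> (\<Sum>n. emeasure lborel (block_set (f n)))"
        by (rule emeasure_subadditive_countably) (auto simp: block_set_def intro!: borel_open)
      also have "\<dots> = (SUP n. \<Sum>i<n. emeasure lborel (block_set (f i)))" by (rule suminf_eq_SUP)
      also have "\<dots> \<le> ennreal (IP_norm b - e)"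
      proof (rule SUP_least)
        fix n
        have "(\<Sum>i<n. emeasure lborel (block_set (f i))) = ennreal (\<Sum>i<n. Leb (f i))"
          using Lnn fb emU[OF fb] by (simp add: sum_ennreal)
        also have "\<dots> \<le> ennreal (IP_norm b - e)" using le[of n] by (rule ennreal_leI)
        finally show "(\<Sum>i<n. emeasure lborel (block_set (f i))) \<le> ennreal (IP_norm b - e)" .
      qed
      finally have "IP_norm b \<le> IP_norm b - e"
        using \<open>\<not> IP_norm b < e\<close> by (simp add: ennreal_le_iff)
      thus False using e by simp
    qed
  qed
qed

lemma match_block:
  assumes B: "b \<in> IH" and G: "g \<in> IH" and U: "U \<in> b" and d: "0 < d" and LU: "2 * d < Leb U"
    and H1: "\<forall>x\<in>Cset b. \<exists>y\<in>Cset g. \<bar>x - y\<bar> < d"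
    and H2: "\<forall>y\<in>Cset g. \<exists>x\<in>Cset b. \<bar>x - y\<bar> < d"
  shows "\<exists>V\<in>g. \<bar>fst V - fst U\<bar> < d \<and> \<bar>snd V - snd U\<bar> < d"
proof -
  define a where "a = fst U"
  define c where "c = snd U"
  define m where "m = (a + c) / 2"
  have bU: "block_set U = {a<..<c}" by (simp add: block_set_def a_def c_def)
  have ac: "c - a > 2 * d" using LU by (simp add: Leb_def a_def c_def)
  have m1: "a + d < m" "m < c - d" using ac by (simp_all add: m_def field_simps)
  have a0: "0 \<le> a" using IH_blk[OF B U] a_def by simp
  have Cl: "\<And>x. x \<in> Cset b \<Longrightarrow> x \<notin> block_set U" by (simp add: Cset_iff U)
  have claim0: "\<And>z. z \<in> Cset g \<Longrightarrow> a + d \<le> z \<Longrightarrow> z \<le> c - d \<Longrightarrow> False"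
  proof -
    fix z assume z: "z \<in> Cset g" and zz: "a + d \<le> z" "z \<le> c - d"
    obtain x where x: "x \<in> Cset b" "\<bar>x - z\<bar> < d" using H2 z by blast
    have "a < x" "x < c" using x(2) zz by (simp_all add: abs_less_iff)
    hence "x \<in> block_set U" using bU by simp
    thus False using Cl x by auto
  qed
  have mnot: "m \<notin> Cset g" using claim0[of m] m1 by fastforce
  obtain z where z: "z \<in> Cset g" "\<bar>IP_norm b - z\<bar> < d" using H1 Cset_L[OF B] by blast
  have zL: "z \<le> IP_norm g" using z by (simp add: Cset_iff)
  have cL: "c \<le> IP_norm b" using IH_blk[OF B U] c_def by simp
  have mL: "m \<le> IP_norm g" using z(2) zL cL m1 by (simp add: abs_less_iff)
  have m0: "0 \<le> m" using a0 m1 d by linarith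
  obtain V where V: "V \<in> g" "m \<in> block_set V" using mL m0 mnot by (auto simp: Cset_iff)
  have cV: "fst V \<in> Cset g" "snd V \<in> Cset g" using Cset_fst[OF G V(1)] Cset_snd[OF G V(1)] by auto
  have mV: "fst V < m" "m < snd V" using V by (auto simp: block_set_def)
  have Vl: "\<And>y. fst V < y \<Longrightarrow> y < snd V \<Longrightarrow> y \<notin> Cset g"
    using V(1) by (auto simp: Cset_iff block_set_def)
  have f1: "fst V < a + d" using claim0[OF cV(1)] mV m1 by fastforce
  have f2: "a - d < fst V"
  proof (rule ccontr)
    assume A: "\<not> a - d < fst V"
    obtain z where z: "z \<in> Cset g" "\<bar>a - z\<bar> < d" using H1 Cset_fst[OF B U] a_def by blast
    have "fst V < z" "z < snd V" using z(2) A mV m1 by (simp_all add: abs_less_iff)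
    thus False using Vl z(1) by blast
  qed
  have s1: "c - d < snd V" using claim0[OF cV(2)] mV m1 by fastforce
  have s2: "snd V < c + d"
  proof (rule ccontr)
    assume A: "\<not> snd V < c + d"
    obtain z where z: "z \<in> Cset g" "\<bar>c - z\<bar> < d" using H1 Cset_snd[OF B U] c_def by blast
    have "fst V < z" "z < snd V" using z(2) A mV m1 by (simp_all add: abs_less_iff)
    thus False using Vl z(1) by blast
  qed
  have "\<bar>fst V - fst U\<bar> < d" "\<bar>snd V - snd U\<bar> < d"
    using f1 f2 s1 s2 unfolding a_def c_def by (simp_all add: abs_less_iff)
  thus ?thesis using V(1) by blast
qed

lemma infdist_lessD:
  assumes "infdist x A < d" "A \<noteq> {}"
  shows "\<exists>y\<in>A. dist x y < d"
proof -
  have "(INF a\<in>A. dist x a) < d" using assms by (simp add: infdist_notempty)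
  moreover have "bdd_below ((\<lambda>a. dist x a) ` A)" by (rule bdd_belowI[of _ 0]) auto
  ultimately show ?thesis using cINF_less_iff[OF assms(2)] by blast
qed

lemma dH_close:
  assumes B: "b \<in> IH" and G: "g \<in> IH" and dl: "dH b g < d"
  shows "\<forall>x\<in>Cset b. \<exists>y\<in>Cset g. \<bar>x - y\<bar> < d"
proof
  fix x assume x: "x \<in> Cset b"
  have bdd: "bdd_above ((\<lambda>x. infdist x (Cset g)) ` Cset b)"
  proof (rule bdd_aboveI[of _ "IP_norm b"])
    fix t assume "t \<in> (\<lambda>x. infdist x (Cset g)) ` Cset b"
    then obtain w where w: "w \<in> Cset b" "t = infdist w (Cset g)" by auto
    have "t \<le> dist w 0" using w(2) infdist_le[OF Cset_0[OF G]] by simp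
    thus "t \<le> IP_norm b" using w by (auto simp: Cset_iff dist_real_def)
  qed
  have "infdist x (Cset g) \<le> (SUP x\<in>Cset b. infdist x (Cset g))" by (rule cSUP_upper[OF x bdd])
  also have "\<dots> \<le> dH b g" unfolding dH_def hausdorff_dist_def by simp
  finally have "infdist x (Cset g) < d" using dl by simp
  then obtain y where "y \<in> Cset g" "dist x y < d" using infdist_lessD Cset_0[OF G] by blast
  thus "\<exists>y\<in>Cset g. \<bar>x - y\<bar> < d" by (auto simp: dist_real_def)
qed

lemma dH_sym: "dH b g = dH g b"
  unfolding dH_def hausdorff_dist_def by (simp add: max.commute)


lemma sum_list_const_real: "(\<Sum>x\<leftarrow>xs. (r::real)) = real (length xs) * r"
  by (induction xs) (auto simp: algebra_simps)

lemma local_dH':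
  assumes B: "b \<in> IH" and e: "0 < e"
  shows "\<exists>\<delta>>0. \<forall>g\<in>IH. dH b g < \<delta> \<longrightarrow> dH' b g < e"
proof -
  obtain F where F: "finite F" "F \<subseteq> b" "IP_norm b - e / 2 < (\<Sum>U\<in>F. Leb U)"
    using finite_approx[OF B, of "e/2"] e by auto
  define n where "n = card F"
  have Lpos: "\<And>U. U \<in> F \<Longrightarrow> 0 < Leb U" using IH_blk(2)[OF B] F(2) by (force simp: Leb_def)
  define mn where "mn = Min (insert 1 (Leb ` F))"
  have mn0: "0 < mn" unfolding mn_def using F(1) Lpos by simp
  have mnle: "\<And>U. U \<in> F \<Longrightarrow> mn \<le> Leb U" unfolding mn_def using F(1) by (intro Min_le) auto
  define d where "d = min (e / (2 * (4 * real n + 1))) (mn / 3)"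
  have d0: "0 < d" unfolding d_def using e mn0 by (simp add: add_pos_nonneg)
  have d1: "\<And>U. U \<in> F \<Longrightarrow> 2 * d < Leb U"
  proof -
    fix U assume "U \<in> F"
    have "d \<le> mn / 3" unfolding d_def by (rule min.cobounded2)
    thus "2 * d < Leb U" using mnle[OF \<open>U \<in> F\<close>] mn0 by linarith
  qed
  have d2: "(4 * real n + 1) * d \<le> e / 2"
  proof -
    have "d \<le> e / (2 * (4 * real n + 1))" unfolding d_def by (rule min.cobounded1)
    hence "(4 * real n + 1) * d \<le> (4 * real n + 1) * (e / (2 * (4 * real n + 1)))"
      by (intro mult_left_mono) auto
    also have "\<dots> = e / 2" by (simp add: field_simps)
    finally show ?thesis .
  qed
  show ?thesis
  proof (intro exI[of _ d] conjI ballI impI d0)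
    fix g assume G: "g \<in> IH" and dl: "dH b g < d"
    have H1: "\<forall>x\<in>Cset b. \<exists>y\<in>Cset g. \<bar>x - y\<bar> < d" by (rule dH_close[OF B G dl])
    have H2': "\<forall>x\<in>Cset g. \<exists>y\<in>Cset b. \<bar>x - y\<bar> < d" by (rule dH_close[OF G B]) (use dl dH_sym in auto)
    hence H2: "\<forall>y\<in>Cset g. \<exists>x\<in>Cset b. \<bar>x - y\<bar> < d" by (metis abs_minus_commute)
    have "\<forall>U\<in>F. \<exists>V. V \<in> g \<and> \<bar>fst V - fst U\<bar> < d \<and> \<bar>snd V - snd U\<bar> < d"
      using match_block[OF B G _ d0 _ H1 H2] F(2) d1 by blast
    then obtain Gm where Gm0: "\<forall>U\<in>F. Gm U \<in> g \<and> \<bar>fst (Gm U) - fst U\<bar> < d \<and> \<bar>snd (Gm U) - snd U\<bar> < d"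
      by (rule bchoice[THEN exE])
    hence Gm: "\<And>U. U \<in> F \<Longrightarrow> Gm U \<in> g" "\<And>U. U \<in> F \<Longrightarrow> \<bar>fst (Gm U) - fst U\<bar> < d"
      "\<And>U. U \<in> F \<Longrightarrow> \<bar>snd (Gm U) - snd U\<bar> < d" by blast+
    obtain us0 where us0: "set us0 = F" using finite_list[OF F(1)] by blast
    define us where "us = sort_key fst (remdups us0)"
    have setus: "set us = F" unfolding us_def using us0 by simp
    have dus: "distinct us" unfolding us_def by simp
    have injF: "inj_on fst F"
    proof
      fix U V assume "U \<in> F" "V \<in> F" "fst U = fst V"
      thus "U = V" using blk_fst_eq[OF B, of U V] F(2) by blast
    qed
    have "distinct (map fst us)" using dus injF setus by (simp add: distinct_map)
    moreover have "sorted (map fst us)" unfolding us_def by simp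
    ultimately have "sorted_wrt (<) (map fst us)" by (simp add: strict_sorted_iff)
    hence sus: "sorted_wrt (\<lambda>U V. fst U < fst V) us" by (simp add: sorted_wrt_map)
    define cs where "cs = map (\<lambda>U. (U, Gm U)) us"
    have C: "correspondence b g cs"
      unfolding correspondence_def
    proof (intro conjI)
      show "\<forall>p\<in>set cs. fst p \<in> b \<and> snd p \<in> g" using setus F(2) Gm(1) by (auto simp: cs_def)
      show "sorted_wrt (\<lambda>p q. fst (fst p) < fst (fst q)) cs" using sus by (simp add: cs_def sorted_wrt_map)
      have "sorted_wrt (\<lambda>U V. fst (Gm U) < fst (Gm V)) us"
      proof (rule sorted_wrt_mono_rel[OF _ sus])
        fix U V assume UV: "U \<in> set us" "V \<in> set us" "fst U < fst V"
        have "snd U \<le> fst V" using blk_order[OF B _ _ UV(3)] UV setus F(2) by auto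
        moreover have "fst (Gm U) < fst U + d" using Gm(2)[of U] UV setus by (simp add: abs_less_iff)
        moreover have "fst V - d < fst (Gm V)" using Gm(2)[of V] UV setus by (simp add: abs_less_iff)
        moreover have "fst U + 2 * d < snd U" using d1[of U] UV setus by (simp add: Leb_def)
        ultimately show "fst (Gm U) < fst (Gm V)" by linarith
      qed
      thus "sorted_wrt (\<lambda>p q. fst (snd p) < fst (snd q)) cs" by (simp add: cs_def sorted_wrt_map)
    qed
    have SU: "(\<Sum>p\<leftarrow>cs. Leb (fst p)) = (\<Sum>U\<in>F. Leb U)"
      using sum.distinct_set_conv_list[OF dus, of Leb] setus by (simp add: cs_def o_def)
    have SS: "(\<Sum>p\<leftarrow>cs. \<bar>Leb (fst p) - Leb (snd p)\<bar>) \<le> real n * (2 * d)"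
    proof -
      have "(\<Sum>p\<leftarrow>cs. \<bar>Leb (fst p) - Leb (snd p)\<bar>) = (\<Sum>U\<leftarrow>us. \<bar>Leb U - Leb (Gm U)\<bar>)"
        by (simp add: cs_def o_def)
      also have "\<dots> \<le> (\<Sum>U\<leftarrow>us. 2 * d)"
      proof (rule sum_list_mono)
        fix U assume "U \<in> set us"
        hence "U \<in> F" using setus by simp
        thus "\<bar>Leb U - Leb (Gm U)\<bar> \<le> 2 * d" using Gm(2,3)[OF \<open>U \<in> F\<close>]
          by (simp add: Leb_def abs_le_iff abs_less_iff)
      qed
      also have "\<dots> = real n * (2 * d)"
        using distinct_card[OF dus] setus by (simp add: sum_list_const_real n_def)
      finally show ?thesis .
    qed
    have SV: "(\<Sum>p\<leftarrow>cs. Leb (fst p)) - (\<Sum>p\<leftarrow>cs. Leb (snd p)) \<le> (\<Sum>p\<leftarrow>cs. \<bar>Leb (fst p) - Leb (snd p)\<bar>)"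
      using sum_list_abs_diff[of "\<lambda>p. Leb (fst p)" cs "\<lambda>p. Leb (snd p)"] by simp
    obtain x where x: "x \<in> Cset b" "\<bar>x - IP_norm g\<bar> < d" using H2 Cset_L[OF G] by blast
    have Lg: "IP_norm g < IP_norm b + d" using x by (simp add: Cset_iff abs_less_iff)
    have n0: "0 \<le> real n" by simp
    define Sx where "Sx = (\<Sum>p\<leftarrow>cs. \<bar>Leb (fst p) - Leb (snd p)\<bar>)"
    define SUx where "SUx = (\<Sum>p\<leftarrow>cs. Leb (fst p))"
    define SVx where "SVx = (\<Sum>p\<leftarrow>cs. Leb (snd p))"
    define nd where "nd = real n * d"
    have f1: "Sx \<le> 2 * nd" using SS unfolding Sx_def nd_def by (simp add: algebra_simps)
    have f2: "4 * nd + d \<le> e / 2" using d2 unfolding nd_def by (simp add: algebra_simps)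
    have f3: "SUx - SVx \<le> Sx" using SV unfolding Sx_def SUx_def SVx_def .
    have f4: "IP_norm b - e / 2 < SUx" using F(3) SU unfolding SUx_def by simp
    have nd0: "0 \<le> nd" unfolding nd_def using d0 by simp
    have "Sx + IP_norm b - SUx < e" using f1 f2 f4 d0 nd0 by linarith
    moreover have "Sx + IP_norm g - SVx < e" using f1 f2 f3 f4 Lg d0 nd0 by linarith
    ultimately have "dis_H b g cs < e"
      unfolding dis_H_def Let_def Sx_def SUx_def SVx_def by simp
    thus "dH' b g < e" using dH'_le[OF B G C] by simp
  qed
qed

lemma topo_equiv: "metric_open IH dH S \<longleftrightarrow> metric_open IH dH' S"
proof
  assume A: "metric_open IH dH S"
  show "metric_open IH dH' S" unfolding metric_open_def
  proof (intro conjI ballI)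
    show "S \<subseteq> IH" using A by (simp add: metric_open_def)
    fix x assume x: "x \<in> S"
    obtain e where e: "e > 0" "\<forall>y\<in>IH. dH x y < e \<longrightarrow> y \<in> S" using A x by (auto simp: metric_open_def)
    have xI: "x \<in> IH" using A x by (auto simp: metric_open_def)
    show "\<exists>e>0. \<forall>y\<in>IH. dH' x y < e \<longrightarrow> y \<in> S"
    proof (intro exI[of _ "e/2"] conjI ballI impI)
      show "0 < e / 2" using e by simp
      fix y assume "y \<in> IH" "dH' x y < e / 2"
      thus "y \<in> S" using dH_le_2dH'[OF xI \<open>y \<in> IH\<close>] e(2) by force
    qed
  qed
next
  assume A: "metric_open IH dH' S"
  show "metric_open IH dH S" unfolding metric_open_def
  proof (intro conjI ballI)
    show "S \<subseteq> IH" using A by (simp add: metric_open_def)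
    fix x assume x: "x \<in> S"
    obtain e where e: "e > 0" "\<forall>y\<in>IH. dH' x y < e \<longrightarrow> y \<in> S" using A x by (auto simp: metric_open_def)
    have xI: "x \<in> IH" using A x by (auto simp: metric_open_def)
    obtain d where "d > 0" "\<forall>g\<in>IH. dH x g < d \<longrightarrow> dH' x g < e" using local_dH'[OF xI e(1)] by blast
    thus "\<exists>e>0. \<forall>y\<in>IH. dH x y < e \<longrightarrow> y \<in> S" using e(2) by blast
  qed
qed


lemma card_less_real: "card {n::nat. real n < X} = nat \<lceil>X\<rceil>"
proof -
  have "{n::nat. real n < X} = {..<nat \<lceil>X\<rceil>}"
  proof (intro set_eqI iffI)
    fix n assume "n \<in> {n::nat. real n < X}"
    hence "real n < X" by simp
    hence "int n < \<lceil>X\<rceil>" by (simp add: less_ceiling_iff)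
    thus "n \<in> {..<nat \<lceil>X\<rceil>}" by simp
  next
    fix n assume "n \<in> {..<nat \<lceil>X\<rceil>}"
    hence "int n < \<lceil>X\<rceil>" by simp
    hence "real n < X" by (simp add: less_ceiling_iff)
    thus "n \<in> {n::nat. real n < X}" by simp
  qed
  thus ?thesis by simp
qed

lemma nat_ceil_bounds: "X \<le> real (nat \<lceil>X\<rceil>)" "real (nat \<lceil>X\<rceil>) \<le> \<bar>X\<bar> + 1"
proof -
  show "X \<le> real (nat \<lceil>X\<rceil>)"
  proof (cases "X \<le> 0")
    case False thus ?thesis by (simp add: le_of_int_ceiling)
  qed (simp)
  show "real (nat \<lceil>X\<rceil>) \<le> \<bar>X\<bar> + 1"
  proof (cases "\<lceil>X\<rceil> \<le> 0")
    case True thus ?thesis by simp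
  next
    case False
    hence "real (nat \<lceil>X\<rceil>) = of_int \<lceil>X\<rceil>" by simp
    also have "\<dots> \<le> X + 1" by (rule of_int_ceiling_le_add_one)
    finally show ?thesis by simp
  qed
qed

lemma powr_tendsto0: assumes "0 < (a::real)" shows "((\<lambda>h. h powr a) \<longlongrightarrow> 0) (at_right 0)"
  by (rule tendsto_zero_powrI[OF tendsto_ident_at tendsto_const _ assms])
     (use eventually_at_right_less[of "0::real"] in \<open>auto elim: eventually_mono\<close>)

lemma lim_count:
  assumes a: "0 < (a::real)" and c: "0 < c"
  shows "((\<lambda>h. h powr a * real (nat \<lceil>c / h powr a - real N\<rceil>)) \<longlongrightarrow> c) (at_right 0)"
proof (rule tendsto_sandwich)
  have pos: "\<forall>\<^sub>F h in at_right 0. 0 < (h::real)" by (rule eventually_at_right_less)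
  have key: "\<And>h::real. 0 < h \<Longrightarrow> h powr a * (c / h powr a - real N) = c - real N * h powr a"
    by (simp add: field_simps)
  show "\<forall>\<^sub>F h in at_right 0. c - real N * h powr a \<le> h powr a * real (nat \<lceil>c / h powr a - real N\<rceil>)"
    using pos
  proof eventually_elim
    case (elim h)
    have "h powr a * (c / h powr a - real N) \<le> h powr a * real (nat \<lceil>c / h powr a - real N\<rceil>)"
      by (rule mult_left_mono[OF nat_ceil_bounds(1)]) simp
    thus ?case using key[OF elim] by simp
  qed
  show "\<forall>\<^sub>F h in at_right 0. h powr a * real (nat \<lceil>c / h powr a - real N\<rceil>) \<le> \<bar>c - real N * h powr a\<bar> + h powr a"
    using pos
  proof eventually_elim
    case (elim h)
    have "h powr a * real (nat \<lceil>c / h powr a - real N\<rceil>) \<le> h powr a * (\<bar>c / h powr a - real N\<bar> + 1)"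
      by (rule mult_left_mono[OF nat_ceil_bounds(2)]) simp
    also have "\<dots> = \<bar>h powr a\<bar> * \<bar>c / h powr a - real N\<bar> + h powr a"
      by (simp add: distrib_left)
    also have "\<dots> = \<bar>h powr a * (c / h powr a - real N)\<bar> + h powr a"
      by (simp only: abs_mult)
    finally show ?case using key[OF elim] by simp
  qed
  show "((\<lambda>h. c - real N * h powr a) \<longlongrightarrow> c) (at_right 0)"
    using tendsto_diff[OF tendsto_const tendsto_mult[OF tendsto_const powr_tendsto0[OF a]], of c "real N"] by simp
  show "((\<lambda>h. \<bar>c - real N * h powr a\<bar> + h powr a) \<longlongrightarrow> c) (at_right 0)"
    using tendsto_add[OF tendsto_rabs[OF tendsto_diff[OF tendsto_const tendsto_mult[OF tendsto_const powr_tendsto0[OF a]]]] powr_tendsto0[OF a], of c "real N"] c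
    by simp
qed


lemma construct:
  fixes al c :: real and N :: nat
  assumes al0: "0 < al" and al1: "al < 1" and c0: "0 < c" and N1: "1 \<le> N"
  defines "p \<equiv> 1 / al"
  defines "f \<equiv> (\<lambda>n::nat. (c / real (n + N)) powr p)"
  defines "s \<equiv> (\<lambda>n. \<Sum>i<n. f i)"
  defines "B \<equiv> range (\<lambda>n. (s n, s (Suc n)))"
  shows "B \<in> IA al \<and> IP_norm B = suminf f \<and> Div_inf al B = Gamma (1 - al) * c"
proof -
  have p1: "1 < p" unfolding p_def using al0 al1 by simp
  have fpos: "\<And>n. 0 < f n" unfolding f_def using c0 N1 by simp
  have feq: "\<And>n. f n = c powr p * real (n + N) powr (- p)"
    unfolding f_def by (simp add: powr_divide powr_minus_divide)
  have "summable (\<lambda>n. real n powr (- p))" using p1 by (simp add: summable_real_powr_iff)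
  hence "summable (\<lambda>n. real (n + N) powr (- p))" using summable_ignore_initial_segment by fastforce
  hence summ: "summable f" unfolding feq by (rule summable_mult)
  define L where "L = suminf f"
  have sSuc: "\<And>n. s (Suc n) = s n + f n" unfolding s_def by simp
  have s0: "s 0 = 0" unfolding s_def by simp
  have snn: "\<And>n. 0 \<le> s n" unfolding s_def using fpos by (simp add: sum_nonneg less_imp_le)
  have smono: "\<And>m n. m \<le> n \<Longrightarrow> s m \<le> s n"
    unfolding s_def by (rule sum_mono2) (use fpos in \<open>auto simp: less_imp_le\<close>)
  have sstrict: "\<And>m n. m < n \<Longrightarrow> s m < s n"
  proof -
    fix m n :: nat assume "m < n"
    hence "s (Suc m) \<le> s n" using smono by simp
    thus "s m < s n" using sSuc[of m] fpos[of m] by simp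
  qed
  have sL: "\<And>n. s n \<le> L" unfolding s_def L_def
    by (rule sum_le_suminf[OF summ]) (use fpos in \<open>auto simp: less_imp_le\<close>)
  have slim: "s \<longlonglongrightarrow> L" unfolding s_def L_def by (rule summable_LIMSEQ[OF summ])
  have L0: "0 \<le> L" using sL[of 0] s0 by simp
  have evt: "\<And>t. t < L \<Longrightarrow> \<exists>M. \<forall>n\<ge>M. t < s n"
  proof -
    fix t assume "t < L"
    hence "eventually (\<lambda>n. t < s n) sequentially" by (rule order_tendstoD(1)[OF slim])
    thus "\<exists>M. \<forall>n\<ge>M. t < s n" by (simp add: eventually_sequentially)
  qed
  define blk where "blk = (\<lambda>n. (s n, s (Suc n)))"
  have Bdef: "B = range blk" unfolding B_def blk_def by simp
  have injb: "inj blk"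
  proof
    fix m n assume "blk m = blk n"
    hence "s m = s n" by (simp add: blk_def)
    thus "m = n" using sstrict by (metis less_irrefl linorder_neqE_nat)
  qed
  have Lebb: "\<And>n. Leb (blk n) = f n" by (simp add: Leb_def blk_def sSuc)
  have IP: "is_IP_of L B"
    unfolding is_IP_of_def
  proof (intro conjI ballI impI L0)
    fix U assume "U \<in> B"
    then obtain n where U: "U = blk n" using Bdef by auto
    show "0 \<le> fst U" using U snn by (simp add: blk_def)
    show "fst U < snd U" using U sstrict by (simp add: blk_def)
    show "snd U \<le> L" using U sL by (simp add: blk_def)
  next
    fix U V assume "U \<in> B" "V \<in> B" "U \<noteq> V"
    then obtain m n where UV: "U = blk m" "V = blk n" "m \<noteq> n" using Bdef by auto
    show "block_set U \<inter> block_set V = {}"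
    proof (cases "m < n")
      case True
      hence "s (Suc m) \<le> s n" using smono by simp
      thus ?thesis using UV by (auto simp: block_set_def blk_def)
    next
      case False
      hence "n < m" using UV by simp
      hence "s (Suc n) \<le> s m" using smono by simp
      thus ?thesis using UV by (auto simp: block_set_def blk_def)
    qed
  next
    let ?X = "\<Union>U\<in>B. block_set U"
    have sub: "{0..L} - ?X \<subseteq> range s \<union> {L}"
    proof
      fix x assume x: "x \<in> {0..L} - ?X"
      show "x \<in> range s \<union> {L}"
      proof (rule ccontr)
        assume nx: "x \<notin> range s \<union> {L}"
        hence xL: "x < L" using x by auto
        obtain M where M: "\<forall>n\<ge>M. x < s n" using evt[OF xL] by blast
        define K where "K = {n. s n \<le> x}"
        have "K \<subseteq> {..<M}"
        proof
          fix n assume "n \<in> K"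
          hence "s n \<le> x" by (simp add: K_def)
          show "n \<in> {..<M}"
          proof (rule ccontr)
            assume "n \<notin> {..<M}"
            hence "x < s n" using M by simp
            thus False using \<open>s n \<le> x\<close> by simp
          qed
        qed
        hence Kfin: "finite K" using finite_subset by blast
        have "0 \<in> K" using s0 x by (simp add: K_def)
        define k where "k = Max K"
        have kK: "k \<in> K" unfolding k_def using Kfin \<open>0 \<in> K\<close> by (intro Max_in) auto
        have "Suc k \<notin> K" using Max_ge[OF Kfin, of "Suc k"] k_def by auto
        hence "x < s (Suc k)" by (simp add: K_def)
        moreover have "s k < x" using kK nx by (auto simp: K_def order_le_less)
        ultimately have "x \<in> block_set (blk k)" by (simp add: block_set_def blk_def)
        thus False using x Bdef by auto
      qed
    qed
    have "range s \<union> {L} \<in> null_sets lborel" by (rule countable_imp_null_set_lborel) simp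
    moreover have "{0..L} - ?X \<in> sets lborel"
    proof -
      have "open ?X" by (intro open_Union) (auto simp: block_set_def)
      thus ?thesis by (intro sets.Diff) (simp_all add: borel_open)
    qed
    ultimately show "{0..L} - ?X \<in> null_sets lborel" using null_sets_subset sub by blast
  qed
  have normB: "IP_norm B = L" by (rule IP_norm_eq[OF IP])
  have BIH: "B \<in> IH" using IP unfolding IH_def by blast
  have fgt: "\<And>h n. 0 < h \<Longrightarrow> (h < f n \<longleftrightarrow> real n < c / h powr al - real N)"
  proof -
    fix h :: real and n :: nat assume h: "0 < h"
    have hp: "h = (h powr al) powr p" using h al0 by (simp add: powr_powr p_def)
    have r0: "0 < real (n + N)" using N1 by simp
    have ha: "0 < h powr al" using h by simp
    have "h < f n \<longleftrightarrow> (h powr al) powr p < (c / real (n + N)) powr p"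
      using hp unfolding f_def by simp
    also have "\<dots> \<longleftrightarrow> h powr al < c / real (n + N)"
    proof
      assume A: "(h powr al) powr p < (c / real (n + N)) powr p"
      show "h powr al < c / real (n + N)"
      proof (rule ccontr)
        assume "\<not> h powr al < c / real (n + N)"
        hence "(c / real (n + N)) powr p \<le> (h powr al) powr p"
          using p1 c0 r0 by (intro powr_mono2) auto
        thus False using A by simp
      qed
    next
      assume "h powr al < c / real (n + N)"
      thus "(h powr al) powr p < (c / real (n + N)) powr p"
        using p1 ha by (intro powr_less_mono2) auto
    qed
    also have "\<dots> \<longleftrightarrow> h powr al * real (n + N) < c" using r0 by (simp add: less_divide_eq)
    also have "\<dots> \<longleftrightarrow> real (n + N) < c / h powr al" using ha by (simp add: less_divide_eq mult.commute)
    also have "\<dots> \<longleftrightarrow> real n < c / h powr al - real N" by linarith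
    finally show "h < f n \<longleftrightarrow> real n < c / h powr al - real N" .
  qed
  have cntL: "\<And>h. 0 < h \<Longrightarrow> div_count B L h = real (nat \<lceil>c / h powr al - real N\<rceil>)"
  proof -
    fix h :: real assume h: "0 < h"
    have "{U \<in> B. h < Leb U \<and> snd U \<le> L} = blk ` {n. real n < c / h powr al - real N}"
    proof (intro set_eqI iffI)
      fix U assume "U \<in> {U \<in> B. h < Leb U \<and> snd U \<le> L}"
      then obtain n where "U = blk n" "h < f n" using Bdef Lebb by auto
      thus "U \<in> blk ` {n. real n < c / h powr al - real N}" using fgt[OF h] by auto
    next
      fix U assume "U \<in> blk ` {n. real n < c / h powr al - real N}"
      then obtain n where "U = blk n" "real n < c / h powr al - real N" by auto
      thus "U \<in> {U \<in> B. h < Leb U \<and> snd U \<le> L}" using fgt[OF h] Lebb sL Bdef by (auto simp: blk_def)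
    qed
    hence "card {U \<in> B. h < Leb U \<and> snd U \<le> L} = card {n. real n < c / h powr al - real N}"
      using injb by (simp add: card_image inj_on_subset)
    thus "div_count B L h = real (nat \<lceil>c / h powr al - real N\<rceil>)"
      by (simp add: div_count_def card_less_real)
  qed
  have limL: "((\<lambda>h. h powr al * div_count B L h) \<longlongrightarrow> c) (at_right 0)"
  proof (rule Lim_transform_eventually[OF lim_count[OF al0 c0, of N]])
    show "\<forall>\<^sub>F h in at_right 0. h powr al * real (nat \<lceil>c / h powr al - real N\<rceil>) = h powr al * div_count B L h"
      using eventually_at_right_less[of "0::real"] by eventually_elim (simp add: cntL)
  qed
  have limt: "\<And>t. t < L \<Longrightarrow> ((\<lambda>h. h powr al * div_count B t h) \<longlongrightarrow> 0) (at_right 0)"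
  proof -
    fix t assume "t < L"
    obtain M where M: "\<forall>n\<ge>M. t < s n" using evt[OF \<open>t < L\<close>] by blast
    have sub: "{U \<in> B. h < Leb U \<and> snd U \<le> t} \<subseteq> blk ` {..<M}" for h
    proof
      fix U assume "U \<in> {U \<in> B. h < Leb U \<and> snd U \<le> t}"
      then obtain n where n: "U = blk n" "s (Suc n) \<le> t" using Bdef by (auto simp: blk_def)
      have "Suc n < M"
      proof (rule ccontr)
        assume "\<not> Suc n < M"
        hence "t < s (Suc n)" using M by simp
        thus False using n(2) by simp
      qed
      thus "U \<in> blk ` {..<M}" using n by auto
    qed
    have cle: "div_count B t h \<le> real M" for h
    proof -
      have "card {U \<in> B. h < Leb U \<and> snd U \<le> t} \<le> card (blk ` {..<M})"
        by (rule card_mono[OF _ sub]) simp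
      also have "\<dots> \<le> M" using card_image_le[of "{..<M}" blk] by simp
      finally show ?thesis by (simp add: div_count_def)
    qed
    show "((\<lambda>h. h powr al * div_count B t h) \<longlongrightarrow> 0) (at_right 0)"
    proof (rule tendsto_sandwich[of "\<lambda>_. 0" _ _ "\<lambda>h. h powr al * real M"])
      show "\<forall>\<^sub>F h in at_right 0. 0 \<le> h powr al * div_count B t h" by (simp add: div_count_def)
      show "\<forall>\<^sub>F h in at_right 0. h powr al * div_count B t h \<le> h powr al * real M"
        by (intro always_eventually allI mult_left_mono cle) simp
      show "((\<lambda>h. h powr al * real M) \<longlongrightarrow> 0) (at_right 0)"
        using tendsto_mult[OF powr_tendsto0[OF al0] tendsto_const, of "real M"] by simp
    qed simp
  qed
  have "B \<in> IA al" unfolding IA_def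
  proof (intro CollectI conjI BIH ballI)
    fix t assume "t \<in> {0..IP_norm B}"
    hence "t < L \<or> t = L" using normB by auto
    thus "\<exists>l. ((\<lambda>h. h powr al * div_count B t h) \<longlongrightarrow> l) (at_right 0)" using limL limt by blast
  qed
  moreover have "Div_inf al B = Gamma (1 - al) * c"
    unfolding Div_inf_def Div_def normB using tendsto_Lim[OF trivial_limit_at_right_real limL] by simp
  ultimately show ?thesis using normB L_def by simp
qed


lemma empty_IP: "is_IP_of 0 {}"
  unfolding is_IP_of_def by (simp add: countable_imp_null_set_lborel)

lemma empty_IH: "{} \<in> IH" using empty_IP unfolding IH_def by blast

lemma empty_norm: "IP_norm {} = 0" by (rule IP_norm_eq[OF empty_IP])

lemma empty_Cset: "Cset {} = {0}" unfolding Cset_def empty_norm by auto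

lemma empty_IA: "{} \<in> IA al"
  unfolding IA_def using empty_IH by (auto simp: div_count_def)

lemma empty_Div: "Div_inf al {} = 0"
  unfolding Div_inf_def Div_def by (simp add: div_count_def tendsto_Lim[OF trivial_limit_at_right_real tendsto_const])

lemma dH_empty: assumes B: "B \<in> IH" shows "dH B {} \<le> IP_norm B"
proof -
  have "(SUP x\<in>Cset B. infdist x {0}) \<le> IP_norm B"
  proof (rule cSUP_least)
    show "Cset B \<noteq> {}" using Cset_0[OF B] by auto
    fix x assume "x \<in> Cset B"
    thus "infdist x {0} \<le> IP_norm B" by (simp add: Cset_iff dist_real_def)
  qed
  moreover have "(SUP y\<in>{0}. infdist y (Cset B)) = 0" using Cset_0[OF B] by simp
  ultimately show ?thesis using IH_norm_nonneg[OF B] unfolding dH_def hausdorff_dist_def empty_Cset by simp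
qed

lemma d_alpha_empty: "d_alpha al B {} \<ge> \<bar>Div_inf al B\<bar>"
proof -
  have "{dis_alpha al B {} cs |cs. correspondence B {} cs} = {dis_alpha al B {} []}"
  proof (intro set_eqI iffI)
    fix x assume "x \<in> {dis_alpha al B {} cs |cs. correspondence B {} cs}"
    then obtain cs where "correspondence B {} cs" "x = dis_alpha al B {} cs" by auto
    moreover have "cs = []" using \<open>correspondence B {} cs\<close>
      by (cases cs) (auto simp: correspondence_def)
    ultimately show "x \<in> {dis_alpha al B {} []}" by simp
  qed (use corr_nil in auto)
  hence "d_alpha al B {} = dis_alpha al B {} []" unfolding d_alpha_def by simp
  thus ?thesis unfolding dis_alpha_def using empty_Div by simp
qed

lemma part1:
  assumes al0: "0 < al" and al1: "al < 1" and e: "0 < e"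
  shows "\<exists>B\<in>IA al. \<exists>G\<in>IA al. dH B G < e \<and> d_alpha al B G > 1 / e"
proof -
  define G0 where "G0 = Gamma (1 - al)"
  have G0: "0 < G0" unfolding G0_def using al1 by simp
  define c where "c = 2 / (e * G0)"
  have c0: "0 < c" unfolding c_def using e G0 by simp
  define p where "p = 1 / al"
  have p1: "1 < p" unfolding p_def using al0 al1 by simp
  define g where "g = (\<lambda>n::nat. real n powr (- p))"
  have gs: "summable g" unfolding g_def using p1 by (simp add: summable_real_powr_iff)
  have cp: "0 < c powr p" using c0 by simp
  obtain N0 where N0: "\<forall>n\<ge>N0. norm (\<Sum>i. g (i + n)) < e / c powr p"
    using suminf_exist_split[OF _ gs, of "e / c powr p"] e cp by auto
  define N where "N = N0 + 1"
  have N1: "1 \<le> N" unfolding N_def by simp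
  define f where "f = (\<lambda>n::nat. (c / real (n + N)) powr p)"
  have feq: "f = (\<lambda>n. c powr p * g (n + N))"
    unfolding f_def g_def by (auto simp: powr_divide powr_minus_divide)
  have gs': "summable (\<lambda>n. g (n + N))" by (rule summable_ignore_initial_segment[OF gs])
  have "suminf f = c powr p * (\<Sum>n. g (n + N))" unfolding feq by (rule suminf_mult[OF gs'])
  moreover have "(\<Sum>n. g (n + N)) < e / c powr p"
  proof -
    have "0 \<le> (\<Sum>n. g (n + N))" by (rule suminf_nonneg[OF gs']) (simp add: g_def)
    thus ?thesis using N0[rule_format, of N] by (simp add: N_def)
  qed
  ultimately have fe: "suminf f < e" using cp by (simp add: pos_less_divide_eq mult.commute)
  have "\<exists>B. B \<in> IA al \<and> IP_norm B = suminf f \<and> Div_inf al B = Gamma (1 - al) * c"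
    using construct[OF al0 al1 c0 N1] unfolding f_def p_def by blast
  then obtain B where B: "B \<in> IA al" "IP_norm B = suminf f" "Div_inf al B = G0 * c"
    unfolding G0_def by blast
  have BIH: "B \<in> IH" using B(1) by (simp add: IA_def)
  have "dH B {} < e" using dH_empty[OF BIH] B(2) fe by simp
  moreover have "d_alpha al B {} > 1 / e"
  proof -
    have "G0 * c = 2 / e" unfolding c_def using G0 e by (simp add: field_simps)
    hence "\<bar>Div_inf al B\<bar> = 2 / e" using B(3) e by simp
    moreover have "1 / e < 2 / e" using e by (simp add: divide_strict_right_mono)
    ultimately show ?thesis using d_alpha_empty[of al B] by simp
  qed
  ultimately show ?thesis using B(1) empty_IA by blast
qed

theorem proposition3p5:
  fixes \<alpha> :: real
  assumes "0 < \<alpha>" and "\<alpha> < 1"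
  shows "(\<forall>\<epsilon>>0. \<exists>\<beta>\<in>IA \<alpha>. \<exists>\<gamma>\<in>IA \<alpha>. dH \<beta> \<gamma> < \<epsilon> \<and> d_alpha \<alpha> \<beta> \<gamma> > 1 / \<epsilon>)
       \<and> (\<forall>\<beta>\<in>IA \<alpha>. \<forall>\<gamma>\<in>IA \<alpha>. dH' \<beta> \<gamma> \<le> d_alpha \<alpha> \<beta> \<gamma>)
       \<and> (\<forall>S. metric_open IH dH S \<longleftrightarrow> metric_open IH dH' S)"
proof (intro conjI allI impI ballI)
  fix e :: real assume "0 < e"
  thus "\<exists>\<beta>\<in>IA \<alpha>. \<exists>\<gamma>\<in>IA \<alpha>. dH \<beta> \<gamma> < e \<and> d_alpha \<alpha> \<beta> \<gamma> > 1 / e"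
    using part1[OF assms] by blast
next
  fix b g assume "b \<in> IA \<alpha>" "g \<in> IA \<alpha>"
  thus "dH' b g \<le> d_alpha \<alpha> b g" using part2 by (simp add: IA_def)
next
  fix S show "metric_open IH dH S \<longleftrightarrow> metric_open IH dH' S" by (rule topo_equiv)
qed

end
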